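(* Consider problem (VP) under the standing assumptions at $\bar x\in Q_0$. Suppose $\bar x$ is a local weak efficient solution of (VP) (in particular, this applies if $\bar x$ is a local efficient solution), and that the weak Abadie regularity condition holds at $\bar x$, i.e. $L(Q;\bar x)\subset T(Q_0;\bar x)$, where $L(Q;\bar x):=\{v\in X: f_i^{\circ}(\bar x,v)\leqq0\ \forall i\in I,\ g_j^{\circ}(\bar x,v)\leqq 0\ \forall j\in J(\bar x)\}$. Then there is no $u\in X$ with $f_i^{\circ}(\bar x,u)<0$ for all $i\in I$ and $g_j^{\circ}(\bar x,u)\leqq0$ for all $j\in J(\bar x)$.
   Context: Standing setting: $X$ is a Banach space; $I=\{1,\dots,p\}$, $J=\{1,\dots,m\}$; $f_i,g_j\colon X\to\mathbb{R}$; (VP) minimizes $f=(f_1,\dots,f_p)$ over $Q_0:=\{x\in X: g_j(x)\leqq 0,\ j\in J\}$. $J(\bar x):=\{j\in J: g_j(\bar x)=0\}$. Standing assumptions: $f_i$ ($i\in I$), $g_j$ ($j\in J(\bar x)$) locally Lipschitz at $\bar x$; $g_j$ ($j\notin J(\bar x)$) continuous at $\bar x$. $Q:=Q_0\cap\{x: f_i(x)\leqq f_i(\bar x),\ i\in I\}$. Clarke derivative: $F^{\circ}(\bar x,u):=\limsup_{x\to\bar x,\,t\downarrow0}\frac{F(x+tu)-F(x)}{t}$. Tangent cone: $T(\Omega;\bar x):=\{d:\exists t_k\downarrow0,\ \exists d^k\to d,\ \bar x+t_kd^k\in\Omega\ \forall k\}$. $\bar x\in Q_0$ is a local weak efficient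 solution if there is a neighborhood $U$ of $\bar x$ such that no $x\in U\cap Q_0$ satisfies $f_i(x)<f_i(\bar x)$ for all $i\in I$; it is a local efficient solution if no $x\in U\cap Q_0$ satisfies $f(x)\leqq f(\bar x)$ componentwise with $f(x)\neq f(\bar x)$. *)

theory Defs
  imports "HOL-Analysis.Analysis"
begin

definition clarke_dd :: "('a::real_normed_vector \<Rightarrow> real) \<Rightarrow> 'a \<Rightarrow> 'a \<Rightarrow> ereal" where
  "clarke_dd F xbar u =
     Limsup (nhds xbar \<times>\<^sub>F at_right (0::real))
       (\<lambda>(x, t). ereal ((F (x + t *\<^sub>R u) - F x) / t))"

definition tangent_cone :: "'a::real_normed_vector set \<Rightarrow> 'a \<Rightarrow> 'a set" where
  "tangent_cone \<Omega> xbar = {d. \<exists>t dd. (\<forall>k. t k > 0) \<and> t \<longlonglongrightarrow> 0 \<and>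
       dd \<longlonglongrightarrow> d \<and> (\<forall>k. xbar + t k *\<^sub>R dd k \<in> \<Omega>)}"

definition locally_lipschitz_at :: "('a::metric_space \<Rightarrow> real) \<Rightarrow> 'a \<Rightarrow> bool" where
  "locally_lipschitz_at F xbar \<longleftrightarrow>
     (\<exists>r>0. \<exists>L. \<forall>x\<in>ball xbar r. \<forall>y\<in>ball xbar r. \<bar>F x - F y\<bar> \<le> L * dist x y)"

definition feasible :: "nat \<Rightarrow> (nat \<Rightarrow> 'a \<Rightarrow> real) \<Rightarrow> 'a set" where
  "feasible m g = {x. \<forall>j\<in>{1..m}. g j x \<le> 0}"

definition active :: "nat \<Rightarrow> (nat \<Rightarrow> 'a \<Rightarrow> real) \<Rightarrow> 'a \<Rightarrow> nat set" where
  "active m g xbar = {j\<in>{1..m}. g j xbar = 0}"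

definition linearizing_cone ::
  "nat \<Rightarrow> nat \<Rightarrow> (nat \<Rightarrow> 'a::real_normed_vector \<Rightarrow> real) \<Rightarrow> (nat \<Rightarrow> 'a \<Rightarrow> real) \<Rightarrow> 'a \<Rightarrow> 'a set" where
  "linearizing_cone p m f g xbar = {v. (\<forall>i\<in>{1..p}. clarke_dd (f i) xbar v \<le> 0) \<and>
       (\<forall>j\<in>active m g xbar. clarke_dd (g j) xbar v \<le> 0)}"

definition local_weak_efficient ::
  "nat \<Rightarrow> nat \<Rightarrow> (nat \<Rightarrow> 'a::topological_space \<Rightarrow> real) \<Rightarrow> (nat \<Rightarrow> 'a \<Rightarrow> real) \<Rightarrow> 'a \<Rightarrow> bool" where
  "local_weak_efficient p m f g xbar \<longleftrightarrow> xbar \<in> feasible m g \<and>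
     (\<exists>U. open U \<and> xbar \<in> U \<and>
        \<not> (\<exists>x\<in>U \<inter> feasible m g. \<forall>i\<in>{1..p}. f i x < f i xbar))"

end

theory Submission
  imports Defs
begin

lemma key_step:
  fixes F :: "'a::real_normed_vector \<Rightarrow> real"
  assumes lip: "locally_lipschitz_at F xbar"
    and cd: "clarke_dd F xbar u < 0"
    and tpos: "\<forall>k. t k > 0" and t0: "t \<longlonglongrightarrow> 0" and dd: "dd \<longlonglongrightarrow> u"
  shows "eventually (\<lambda>k. F (xbar + t k *\<^sub>R dd k) < F xbar) sequentially"
proof -
  obtain c where c1: "clarke_dd F xbar u < ereal c" and c2: "ereal c < 0"
    using ereal_dense2[OF cd] by blast
  have cneg: "c < 0" using c2 by simp
  have ev1: "eventually (\<lambda>(x, s). ereal ((F (x + s *\<^sub>R u) - F x) / s) < ereal c)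
      (nhds xbar \<times>\<^sub>F at_right (0::real))"
    using Limsup_lessD[OF c1[unfolded clarke_dd_def]] by (simp add: case_prod_unfold del: less_ereal.simps)
  have tr: "filterlim t (at_right 0) sequentially"
    using tendsto_imp_filterlim_at_right[OF t0] tpos by simp
  have lim: "filterlim (\<lambda>k. (xbar, t k)) (nhds xbar \<times>\<^sub>F at_right 0) sequentially"
    by (rule filterlim_Pair[OF _ tr]) simp
  have evA: "eventually (\<lambda>k. (F (xbar + t k *\<^sub>R u) - F xbar) / t k < c) sequentially"
    using filterlim_iff[THEN iffD1, OF lim, rule_format, OF ev1] by simp
  obtain r L where r: "r > 0" and L: "\<forall>x\<in>ball xbar r. \<forall>y\<in>ball xbar r. \<bar>F x - F y\<bar> \<le> L * dist x y"
    using lip unfolding locally_lipschitz_at_def by blast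
  have l1: "(\<lambda>k. xbar + t k *\<^sub>R u) \<longlonglongrightarrow> xbar"
    using tendsto_add[OF tendsto_const tendsto_scaleR[OF t0 tendsto_const]] by simp
  have l2: "(\<lambda>k. xbar + t k *\<^sub>R dd k) \<longlonglongrightarrow> xbar"
    using tendsto_add[OF tendsto_const tendsto_scaleR[OF t0 dd]] by simp
  have evB: "eventually (\<lambda>k. xbar + t k *\<^sub>R u \<in> ball xbar r) sequentially"
    using topological_tendstoD[OF l1, of "ball xbar r"] r by simp
  have evC: "eventually (\<lambda>k. xbar + t k *\<^sub>R dd k \<in> ball xbar r) sequentially"
    using topological_tendstoD[OF l2, of "ball xbar r"] r by simp
  have l3: "(\<lambda>k. \<bar>L\<bar> * norm (dd k - u)) \<longlonglongrightarrow> 0"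
  proof -
    have "(\<lambda>k. dd k - u) \<longlonglongrightarrow> 0" using dd by (simp add: LIM_zero)
    hence "(\<lambda>k. norm (dd k - u)) \<longlonglongrightarrow> 0" using tendsto_norm_zero by blast
    thus ?thesis using tendsto_mult_right_zero by blast
  qed
  have evD: "eventually (\<lambda>k. \<bar>L\<bar> * norm (dd k - u) < - c) sequentially"
    using order_tendstoD(2)[OF l3] cneg by simp
  show ?thesis
    using evA evB evC evD
  proof eventually_elim
    case (elim k)
    have tk: "t k > 0" using tpos by simp
    have b: "\<bar>F (xbar + t k *\<^sub>R dd k) - F (xbar + t k *\<^sub>R u)\<bar>
        \<le> L * dist (xbar + t k *\<^sub>R dd k) (xbar + t k *\<^sub>R u)"
      using L elim by blast
    have e: "dist (xbar + t k *\<^sub>R dd k) (xbar + t k *\<^sub>R u) = t k * norm (dd k - u)"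
      using tk by (simp add: dist_norm scaleR_diff_right[symmetric])
    have m: "L * (t k * norm (dd k - u)) \<le> \<bar>L\<bar> * (t k * norm (dd k - u))"
      using tk by (intro mult_right_mono) auto
    have "F (xbar + t k *\<^sub>R dd k) - F (xbar + t k *\<^sub>R u) \<le> \<bar>L\<bar> * (t k * norm (dd k - u))"
      using b m unfolding e by (smt (verit) abs_ge_self)
    also have "\<dots> = t k * (\<bar>L\<bar> * norm (dd k - u))" by simp
    also have "\<dots> < t k * (- c)" using elim tk by (intro mult_strict_left_mono) auto
    finally have a: "F (xbar + t k *\<^sub>R dd k) - F (xbar + t k *\<^sub>R u) < - c * t k" by (simp add: mult.commute)
    have "F (xbar + t k *\<^sub>R u) - F xbar < c * t k"
      using elim tk by (simp add: divide_less_eq)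
    with a show ?case by simp
  qed
qed

theorem theorem4p1:
  fixes f g :: "nat \<Rightarrow> 'a::banach \<Rightarrow> real" and p m :: nat and xbar :: 'a
  assumes "xbar \<in> feasible m g"
    and "\<forall>i\<in>{1..p}. locally_lipschitz_at (f i) xbar"
    and "\<forall>j\<in>active m g xbar. locally_lipschitz_at (g j) xbar"
    and "\<forall>j\<in>{1..m} - active m g xbar. isCont (g j) xbar"
    and "local_weak_efficient p m f g xbar"
    and "linearizing_cone p m f g xbar \<subseteq> tangent_cone (feasible m g) xbar"
  shows "\<not> (\<exists>u. (\<forall>i\<in>{1..p}. clarke_dd (f i) xbar u < 0) \<and>
                (\<forall>j\<in>active m g xbar. clarke_dd (g j) xbar u \<le> 0))"
proof
  assume "\<exists>u. (\<forall>i\<in>{1..p}. clarke_dd (f i) xbar u < 0) \<and>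
                (\<forall>j\<in>active m g xbar. clarke_dd (g j) xbar u \<le> 0)"
  then obtain u where u1: "\<forall>i\<in>{1..p}. clarke_dd (f i) xbar u < 0"
    and u2: "\<forall>j\<in>active m g xbar. clarke_dd (g j) xbar u \<le> 0" by blast
  have "u \<in> linearizing_cone p m f g xbar"
    unfolding linearizing_cone_def using u1 u2 by (auto intro: less_imp_le)
  hence "u \<in> tangent_cone (feasible m g) xbar" using assms(6) by blast
  then obtain t dd where tpos: "\<forall>k. t k > 0" and t0: "t \<longlonglongrightarrow> 0" and dd: "dd \<longlonglongrightarrow> u"
    and feas: "\<forall>k. xbar + t k *\<^sub>R dd k \<in> feasible m g"
    unfolding tangent_cone_def by blast
  obtain U where U: "open U" "xbar \<in> U"
    and nU: "\<not> (\<exists>x\<in>U \<inter> feasible m g. \<forall>i\<in>{1..p}. f i x < f i xbar)"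
    using assms(5) unfolding local_weak_efficient_def by blast
  have l2: "(\<lambda>k. xbar + t k *\<^sub>R dd k) \<longlonglongrightarrow> xbar"
    using tendsto_add[OF tendsto_const tendsto_scaleR[OF t0 dd]] by simp
  have evU: "eventually (\<lambda>k. xbar + t k *\<^sub>R dd k \<in> U) sequentially"
    using topological_tendstoD[OF l2 U] .
  have evF: "eventually (\<lambda>k. \<forall>i\<in>{1..p}. f i (xbar + t k *\<^sub>R dd k) < f i xbar) sequentially"
  proof (rule eventually_ball_finite)
    show "finite {1..p}" by simp
    show "\<forall>i\<in>{1..p}. eventually (\<lambda>k. f i (xbar + t k *\<^sub>R dd k) < f i xbar) sequentially"
    proof
      fix i assume "i \<in> {1..p}"
      thus "eventually (\<lambda>k. f i (xbar + t k *\<^sub>R dd k) < f i xbar) sequentially"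
        using key_step[OF _ _ tpos t0 dd, of "f i" xbar] assms(2) u1 by blast
    qed
  qed
  obtain k where "xbar + t k *\<^sub>R dd k \<in> U"
    "\<forall>i\<in>{1..p}. f i (xbar + t k *\<^sub>R dd k) < f i xbar"
    using eventually_happens[OF eventually_conj[OF evU evF]] by auto
  thus False using nU feas by blast
qed

end
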